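(* Let $t\ge3$, let $\mathcal C$ be an $(n,k,r,t)$-SLRC, let $G$ be a minimal repair graph of $\mathcal C$, and let $v$ be a source of $G$ with $\mathrm{Out}(v)=\{v_1,v_2\}$, $v_1\neq v_2$. Then: 1) $\mathrm{Out}(v_1)\ne\emptyset$ or $\mathrm{Out}(v_2)\ne\emptyset$; 2) if $\{v_1\}=\mathrm{Out}(u)$ for some source $u$, then $\mathrm{Out}(v_2)\ne\emptyset$; 3) if $\{v_1\}=\mathrm{Out}(u)$ for some source $u$, then $|\mathrm{Out}(w)|\ge2$ for every source $w\in\mathrm{In}(v_2)$.
   Context: For an $[n,k]$ linear code $\mathcal C$ over a finite field $\mathbb F$, a recovering set of $i\in[n]$ is a set $R\subseteq[n]\setminus\{i\}$ with nonzero $a_j\in\mathbb F$ such that $x_i=\sum_{j\in R}a_jx_j$ for all $x\in\mathcal C$; standing assumption: recovering sets have size $2\le|R|\le r<k$. $\mathcal C$ is an $(n,k,r,t)$-SLRC if every $E\subseteq[n]$ with $|E|\le t$ can be indexed $\{i_1,\dots,i_{|E|}\}$ so that each $i_\ell$ has a recovering set $R_\ell\subseteq([n]\setminus E)\cup\{i_1,\dots,i_{\ell-1}\}$. A repair graph of $\mathcal C$ is a directed acyclic graph on vertex set $[n]$ such that for every vertex $i$ with nonempty in-neighbourhood $\mathrm{In}(i)$, $\mathrm{In}(i)$ is a recovering set of $i$. A source is a vertex with no in-neighbours. A minimal repair graph is a repair graph with the minimum number of sources among all repair graphs of $\mathcal C$. $\mathrm{Out}(v)$ denotes the set of out-neighbours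 of $v$. *)

theory Defs
  imports Complex_Main "HOL-Library.Function_Algebras"
begin

text \<open>Coordinates are indexed by [n] = {0..<n}. Codewords are functions nat => F
  vanishing outside [n]. Scalar multiplication is pointwise.\<close>

definition cscale :: "'a::field \<Rightarrow> (nat \<Rightarrow> 'a) \<Rightarrow> (nat \<Rightarrow> 'a)" where
  "cscale c x = (\<lambda>i. c * x i)"

definition linear_code :: "nat \<Rightarrow> nat \<Rightarrow> (nat \<Rightarrow> 'a::{field,finite}) set \<Rightarrow> bool" where
  "linear_code n k C \<longleftrightarrow>
     C \<subseteq> {x. \<forall>i. n \<le> i \<longrightarrow> x i = 0} \<and>
     module.subspace cscale C \<and>
     vector_space.dim cscale C = k"

definition recovering_set ::
  "nat \<Rightarrow> nat \<Rightarrow> (nat \<Rightarrow> 'a::field) set \<Rightarrow> nat \<Rightarrow> nat set \<Rightarrow> bool" where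
  "recovering_set n r C i R \<longleftrightarrow>
     R \<subseteq> {0..<n} - {i} \<and> 2 \<le> card R \<and> card R \<le> r \<and>
     (\<exists>a. (\<forall>j\<in>R. a j \<noteq> 0) \<and> (\<forall>x\<in>C. x i = (\<Sum>j\<in>R. a j * x j)))"

definition SLRC :: "nat \<Rightarrow> nat \<Rightarrow> nat \<Rightarrow> nat \<Rightarrow> (nat \<Rightarrow> 'a::{field,finite}) set \<Rightarrow> bool" where
  "SLRC n k r t C \<longleftrightarrow>
     linear_code n k C \<and> r < k \<and>
     (\<forall>E. E \<subseteq> {0..<n} \<and> card E \<le> t \<longrightarrow>
        (\<exists>is. distinct is \<and> set is = E \<and>
           (\<forall>l < length is. \<exists>R. recovering_set n r C (is ! l) R \<and>
                R \<subseteq> ({0..<n} - E) \<union> set (take l is))))"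

definition In_nb :: "(nat \<times> nat) set \<Rightarrow> nat \<Rightarrow> nat set" where
  "In_nb G v = {u. (u, v) \<in> G}"

definition Out_nb :: "(nat \<times> nat) set \<Rightarrow> nat \<Rightarrow> nat set" where
  "Out_nb G v = {w. (v, w) \<in> G}"

definition repair_graph :: "nat \<Rightarrow> nat \<Rightarrow> (nat \<Rightarrow> 'a::field) set \<Rightarrow> (nat \<times> nat) set \<Rightarrow> bool" where
  "repair_graph n r C G \<longleftrightarrow>
     G \<subseteq> {0..<n} \<times> {0..<n} \<and> acyclic G \<and>
     (\<forall>i\<in>{0..<n}. In_nb G i \<noteq> {} \<longrightarrow> recovering_set n r C i (In_nb G i))"

definition sources :: "nat \<Rightarrow> (nat \<times> nat) set \<Rightarrow> nat set" where
  "sources n G = {v \<in> {0..<n}. In_nb G v = {}}"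

definition minimal_repair_graph ::
  "nat \<Rightarrow> nat \<Rightarrow> (nat \<Rightarrow> 'a::field) set \<Rightarrow> (nat \<times> nat) set \<Rightarrow> bool" where
  "minimal_repair_graph n r C G \<longleftrightarrow>
     repair_graph n r C G \<and>
     (\<forall>G'. repair_graph n r C G' \<longrightarrow> card (sources n G) \<le> card (sources n G'))"

end

theory Submission
  imports Defs
begin

lemma acyc_lemma:
  assumes acG: "acyclic G"
  and h1: "\<And>a b. (a,b) \<in> H \<Longrightarrow> b \<notin> E \<Longrightarrow> (a,b) \<in> G"
  and h2: "\<And>a b. (a,b) \<in> H \<Longrightarrow> a \<in> E \<Longrightarrow> b \<in> E \<and> (f a :: nat) < f b"
  shows "acyclic H"
proof -
  have key: "(y \<in> E \<and> (x \<in> E \<longrightarrow> f x < f y)) \<or> (y \<notin> E \<and> x \<notin> E \<and> (x,y) \<in> G\<^sup>+)"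
    if "(x,y) \<in> H\<^sup>+" for x y
    using that
  proof (induction rule: trancl_induct)
    case (base y)
    then show ?case using h1 h2 by blast
  next
    case (step y z)
    show ?case
    proof (cases "z \<in> E")
      case True
      then show ?thesis using step h2 by fastforce
    next
      case False
      then have "y \<notin> E" using step h2 by blast
      then have "(y,z) \<in> G" using step h1 False by blast
      then show ?thesis using step False \<open>y \<notin> E\<close> by (meson trancl.trancl_into_trancl)
    qed
  qed
  show ?thesis unfolding acyclic_def
  proof (intro allI notI)
    fix x assume "(x,x) \<in> H\<^sup>+"
    from key[OF this] acG show False unfolding acyclic_def by auto
  qed
qed

lemma rg_irrefl: "repair_graph n r C G \<Longrightarrow> (x,x) \<notin> G"
  unfolding repair_graph_def acyclic_def by blast

definition idx :: "nat list \<Rightarrow> nat \<Rightarrow> nat" where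
  "idx xs x = (THE j. j < length xs \<and> xs ! j = x)"

lemma idx_props: "distinct xs \<Longrightarrow> x \<in> set xs \<Longrightarrow> idx xs x < length xs \<and> xs ! idx xs x = x"
  unfolding idx_def by (rule theI') (rule distinct_Ex1)

lemma idx_nth: "distinct xs \<Longrightarrow> j < length xs \<Longrightarrow> idx xs (xs ! j) = j"
  using idx_props[of xs "xs ! j"] nth_eq_iff_index_eq by fastforce

lemma idx_take: "distinct xs \<Longrightarrow> a \<in> set (take m xs) \<Longrightarrow> idx xs a < m"
proof -
  assume d: "distinct xs" and a: "a \<in> set (take m xs)"
  then obtain j where "j < length (take m xs)" "take m xs ! j = a" by (metis in_set_conv_nth)
  then have "j < m" "j < length xs" "xs ! j = a" by auto
  then show ?thesis using idx_nth[OF d] by auto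
qed

lemma closed_source_false:
  fixes C :: "(nat \<Rightarrow> 'a::{field,finite}) set"
  assumes slrc: "SLRC n k r t C" and min: "minimal_repair_graph n r C G"
    and E: "E \<subseteq> {0..<n}" "card E \<le> t" and s: "s \<in> E" "s \<in> sources n G"
    and cl: "\<forall>x\<in>E. Out_nb G x \<subseteq> E"
  shows False
proof -
  from slrc E obtain xs where d: "distinct xs" "set xs = E" and
    rec: "\<forall>l<length xs. \<exists>R. recovering_set n r C (xs!l) R \<and> R \<subseteq> ({0..<n} - E) \<union> set (take l xs)"
    unfolding SLRC_def by blast
  from rec have "\<forall>l. \<exists>R. l<length xs \<longrightarrow> recovering_set n r C (xs!l) R \<and> R \<subseteq> ({0..<n} - E) \<union> set (take l xs)"
    by blast
  then obtain Rf where Rf: "\<forall>l. l<length xs \<longrightarrow> recovering_set n r C (xs!l) (Rf l) \<and> Rf l \<subseteq> ({0..<n} - E) \<union> set (take l xs)"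
    by metis
  have rg: "repair_graph n r C G" using min by (simp add: minimal_repair_graph_def)
  have recx: "recovering_set n r C x (Rf (idx xs x)) \<and> Rf (idx xs x) \<subseteq> ({0..<n}-E) \<union> set (take (idx xs x) xs)"
    if "x \<in> E" for x
    using Rf idx_props[OF d(1), of x] that d(2) by metis
  define H where "H = {(a,b). (a,b)\<in>G \<and> b\<notin>E} \<union> {(a,x). x\<in>E \<and> a \<in> Rf (idx xs x)}"
  have InH: "In_nb H i = (if i \<in> E then Rf (idx xs i) else In_nb G i)" for i
    by (auto simp: H_def In_nb_def)
  have sub: "H \<subseteq> {0..<n} \<times> {0..<n}"
  proof
    fix p assume "p \<in> H"
    then obtain a b where p: "p = (a,b)" by (cases p)
    show "p \<in> {0..<n} \<times> {0..<n}"
    proof (cases "(a,b) \<in> G \<and> b \<notin> E")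
      case True
      then show ?thesis using rg p unfolding repair_graph_def by blast
    next
      case False
      then have "b \<in> E" "a \<in> Rf (idx xs b)" using \<open>p \<in> H\<close> p H_def by auto
      then show ?thesis using recx[of b] E p unfolding recovering_set_def by blast
    qed
  qed
  have ac: "acyclic H"
  proof (rule acyc_lemma[where G=G and E=E and f="idx xs"])
    show "acyclic G" using rg repair_graph_def by blast
  next
    fix a b assume "(a,b) \<in> H" "b \<notin> E" then show "(a,b) \<in> G" by (auto simp: H_def)
  next
    fix a b assume ab: "(a,b) \<in> H" "a \<in> E"
    show "b \<in> E \<and> idx xs a < idx xs b"
    proof (cases "(a,b) \<in> G \<and> b \<notin> E")
      case True
      then show ?thesis using cl ab(2) by (auto simp: Out_nb_def)
    next
      case False
      then have "b \<in> E" "a \<in> Rf (idx xs b)" using ab H_def by auto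
      then have "a \<in> set (take (idx xs b) xs)" using recx[of b] ab(2) by blast
      then show ?thesis using idx_take[OF d(1)] \<open>b \<in> E\<close> by blast
    qed
  qed
  have rgH: "repair_graph n r C H"
    unfolding repair_graph_def
  proof (intro conjI sub ac ballI impI)
    fix i assume "i \<in> {0..<n}" "In_nb H i \<noteq> {}"
    show "recovering_set n r C i (In_nb H i)"
    proof (cases "i \<in> E")
      case True then show ?thesis using recx InH by simp
    next
      case False then show ?thesis using InH rg \<open>i \<in> {0..<n}\<close> \<open>In_nb H i \<noteq> {}\<close>
        unfolding repair_graph_def by auto
    qed
  qed
  have ss: "sources n H \<subseteq> sources n G - {s}"
  proof
    fix i assume i: "i \<in> sources n H"
    then have i1: "i \<in> {0..<n}" "In_nb H i = {}" by (auto simp: sources_def)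
    have "i \<notin> E"
    proof
      assume "i \<in> E"
      then have "2 \<le> card (Rf (idx xs i))" using recx unfolding recovering_set_def by blast
      then have "Rf (idx xs i) \<noteq> {}" by auto
      then show False using i1 InH \<open>i \<in> E\<close> by simp
    qed
    then show "i \<in> sources n G - {s}" using i1 InH s(1) by (auto simp: sources_def)
  qed
  have "finite (sources n G)" by (simp add: sources_def)
  moreover have "sources n H \<subset> sources n G" using ss s(2) by blast
  ultimately have "card (sources n H) < card (sources n G)"
    by (simp add: psubset_card_mono)
  moreover have "card (sources n G) \<le> card (sources n H)"
    using min rgH unfolding minimal_repair_graph_def by blast
  ultimately show False by simp
qed


lemma rec_swap:
  assumes rs: "recovering_set n r C y R" and uR: "u \<in> R" and yR: "y \<notin> R" and yn: "y < n"
  shows "recovering_set n r C u (insert y (R - {u}))"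
proof -
  have Rs: "R \<subseteq> {0..<n} - {y}" "2 \<le> card R" "card R \<le> r" using rs unfolding recovering_set_def by auto
  have fR: "finite R" using Rs(1) finite_subset by blast
  obtain a where a: "\<forall>j\<in>R. a j \<noteq> 0" "\<forall>x\<in>C. x y = (\<Sum>j\<in>R. a j * x j)"
    using rs unfolding recovering_set_def by blast
  have yu: "y \<noteq> u" using uR yR by blast
  have card: "card (insert y (R - {u})) = card R"
  proof -
    have "card R > 0" using fR uR card_gt_0_iff by blast
    then show ?thesis using fR uR yR by (simp add: card_Suc_Diff1)
  qed
  have sub: "insert y (R - {u}) \<subseteq> {0..<n} - {u}" using Rs(1) yn yu by auto
  define b where "b = (\<lambda>j. if j = y then 1 / a u else - a j / a u)"
  have au: "a u \<noteq> 0" using a(1) uR by blast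
  have bnz: "\<forall>j\<in>insert y (R - {u}). b j \<noteq> 0" using a(1) au by (auto simp: b_def)
  have eq: "x u = (\<Sum>j\<in>insert y (R - {u}). b j * x j)" if xC: "x \<in> C" for x
  proof -
    have s1: "x y = a u * x u + (\<Sum>j\<in>R - {u}. a j * x j)"
      using a(2) xC fR uR by (simp add: sum.remove)
    have s2: "(\<Sum>j\<in>insert y (R - {u}). b j * x j) = b y * x y + (\<Sum>j\<in>R - {u}. b j * x j)"
      using fR yR by simp
    have s3: "(\<Sum>j\<in>R - {u}. b j * x j) = (\<Sum>j\<in>R - {u}. - (a j * x j) / a u)"
      using yR by (intro sum.cong) (auto simp: b_def)
    have s4: "(\<Sum>j\<in>R - {u}. - (a j * x j) / a u) = - (\<Sum>j\<in>R - {u}. a j * x j) / a u"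
      by (simp add: sum_divide_distrib sum_negf)
    show ?thesis using s1 s2 s3 s4 au by (simp add: b_def field_simps)
  qed
  show ?thesis unfolding recovering_set_def
    using sub card Rs bnz eq by auto
qed

definition revG :: "(nat \<times> nat) set \<Rightarrow> nat \<Rightarrow> nat \<Rightarrow> (nat \<times> nat) set" where
  "revG G u y = {(a,b). (a,b)\<in>G \<and> b \<noteq> y} \<union> {(a,u) | a. (a,y)\<in>G \<and> a \<noteq> u} \<union> {(y,u)}"

lemma rev_min:
  assumes min: "minimal_repair_graph n r C G" and u: "u \<in> sources n G" and out: "Out_nb G u = {y}"
  shows "minimal_repair_graph n r C (revG G u y)"
proof -
  have rg: "repair_graph n r C G" using min by (simp add: minimal_repair_graph_def)
  have uy: "(u,y) \<in> G" using out by (auto simp: Out_nb_def)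
  have un: "u < n" "y < n" using rg uy unfolding repair_graph_def by auto
  have neq: "u \<noteq> y" using rg_irrefl[OF rg] uy by blast
  have Inu: "In_nb G u = {}" using u by (simp add: sources_def)
  have InR: "In_nb (revG G u y) i = (if i = y then {} else if i = u then insert y (In_nb G y - {u}) else In_nb G i)" for i
    using Inu neq by (auto simp: revG_def In_nb_def)
  have sub: "revG G u y \<subseteq> {0..<n} \<times> {0..<n}"
    using rg un unfolding repair_graph_def revG_def by auto
  have ac: "acyclic (revG G u y)"
  proof (rule acyc_lemma[where G=G and E="{u}" and f="\<lambda>_. 0"])
    show "acyclic G" using rg repair_graph_def by blast
  next
    fix a b assume "(a,b) \<in> revG G u y" "b \<notin> {u}" then show "(a,b) \<in> G" by (auto simp: revG_def)
  next
    fix a b assume ab: "(a,b) \<in> revG G u y" "a \<in> {u}"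
    then have "(u,b) \<in> G" "b \<noteq> y" using neq by (auto simp: revG_def)
    then show "b \<in> {u} \<and> (0::nat) < 0" using out by (auto simp: Out_nb_def)
  qed
  have recy: "recovering_set n r C y (In_nb G y)"
    using rg un uy unfolding repair_graph_def In_nb_def by auto
  have yIn: "y \<notin> In_nb G y" using rg_irrefl[OF rg] by (auto simp: In_nb_def)
  have uIn: "u \<in> In_nb G y" using uy by (auto simp: In_nb_def)
  have recu: "recovering_set n r C u (insert y (In_nb G y - {u}))"
    using rec_swap[OF recy uIn yIn un(2)] .
  have rgR: "repair_graph n r C (revG G u y)"
    unfolding repair_graph_def
  proof (intro conjI sub ac ballI impI)
    fix i assume i: "i \<in> {0..<n}" "In_nb (revG G u y) i \<noteq> {}"
    show "recovering_set n r C i (In_nb (revG G u y) i)"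
      using i recu rg InR unfolding repair_graph_def by (auto split: if_splits)
  qed
  have srcs: "sources n (revG G u y) = insert y (sources n G - {u})"
    using InR un uIn by (auto simp: sources_def)
  have ynot: "y \<notin> sources n G" using uIn by (auto simp: sources_def)
  have fin: "finite (sources n G)" by (simp add: sources_def)
  have "card (sources n (revG G u y)) = card (sources n G)"
  proof -
    have "card (sources n G) > 0" using fin u card_gt_0_iff by blast
    then show ?thesis using srcs ynot fin u by (simp add: card_Suc_Diff1)
  qed
  then show ?thesis using min rgR unfolding minimal_repair_graph_def by simp
qed


lemma out_sub: "repair_graph n r C G \<Longrightarrow> Out_nb G x \<subseteq> {0..<n}"
  unfolding repair_graph_def Out_nb_def by blast

lemma closed3:
  fixes C :: "(nat \<Rightarrow> 'a::{field,finite}) set"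
  assumes "SLRC n k r t C" "minimal_repair_graph n r C G" "3 \<le> t" "a < n" "b < n" "c < n"
    "a \<in> sources n G" "Out_nb G a \<subseteq> {a,b,c}" "Out_nb G b \<subseteq> {a,b,c}" "Out_nb G c \<subseteq> {a,b,c}"
  shows False
proof (rule closed_source_false[OF assms(1,2), of "{a,b,c}" a])
  show "{a,b,c} \<subseteq> {0..<n}" using assms by simp
  show "card {a,b,c} \<le> t" using assms(3) by (auto simp: card_insert_if)
  show "a \<in> {a,b,c}" by simp
  show "a \<in> sources n G" using assms by simp
  show "\<forall>x\<in>{a,b,c}. Out_nb G x \<subseteq> {a,b,c}" using assms by simp
qed

theorem corollary2:
  fixes C :: "(nat \<Rightarrow> 'a::{field,finite}) set"
    and n k r t :: nat and G :: "(nat \<times> nat) set" and v v1 v2 :: nat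
  assumes "t \<ge> 3"
    and "SLRC n k r t C"
    and "minimal_repair_graph n r C G"
    and "v \<in> sources n G"
    and "Out_nb G v = {v1, v2}" and "v1 \<noteq> v2"
  shows "(Out_nb G v1 \<noteq> {} \<or> Out_nb G v2 \<noteq> {})
    \<and> ((\<exists>u\<in>sources n G. Out_nb G u = {v1}) \<longrightarrow> Out_nb G v2 \<noteq> {})
    \<and> ((\<exists>u\<in>sources n G. Out_nb G u = {v1}) \<longrightarrow>
         (\<forall>w\<in>In_nb G v2. w \<in> sources n G \<longrightarrow> 2 \<le> card (Out_nb G w)))"
proof -
  note t = assms(1) and slrc = assms(2) and min = assms(3) and vs = assms(4)
    and outv = assms(5) and v12 = assms(6)
  have rg: "repair_graph n r C G" using min by (simp add: minimal_repair_graph_def)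
  have vn: "v < n" using vs by (simp add: sources_def)
  have e1: "(v,v1) \<in> G" "(v,v2) \<in> G" using outv by (auto simp: Out_nb_def)
  have v12n: "v1 < n" "v2 < n" using rg e1 unfolding repair_graph_def by auto
  have Inv: "In_nb G v = {}" using vs by (simp add: sources_def)
  have ns1: "v1 \<notin> sources n G" "v2 \<notin> sources n G"
    using e1 by (auto simp: sources_def In_nb_def)
  have irr: "(x,x) \<notin> G" for x using rg_irrefl[OF rg] .
  have ov: "(v,b) \<in> G \<longleftrightarrow> b = v1 \<or> b = v2" for b
    using outv by (auto simp: Out_nb_def set_eq_iff)
  have inv: "(a,v) \<notin> G" for a using Inv by (auto simp: In_nb_def)
  have vv: "v \<noteq> v1" "v \<noteq> v2" using ov irr by blast+
  have P1: "Out_nb G v1 \<noteq> {} \<or> Out_nb G v2 \<noteq> {}"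
  proof (rule ccontr)
    assume "\<not> (Out_nb G v1 \<noteq> {} \<or> Out_nb G v2 \<noteq> {})"
    then have o1: "Out_nb G v1 = {}" "Out_nb G v2 = {}" by auto
    show False
      using closed3[OF slrc min _ vn v12n vs] t outv o1 by simp
  qed
  have P2: "Out_nb G v2 \<noteq> {}" and P3: "\<forall>w\<in>In_nb G v2. w \<in> sources n G \<longrightarrow> 2 \<le> card (Out_nb G w)"
    if "\<exists>u\<in>sources n G. Out_nb G u = {v1}"
  proof -
    from that obtain u where us: "u \<in> sources n G" and outu: "Out_nb G u = {v1}" by blast
    have ou: "(u,b) \<in> G \<longleftrightarrow> b = v1" for b
      using outu by (auto simp: Out_nb_def set_eq_iff)
    have inu: "(a,u) \<notin> G" for a using us by (auto simp: In_nb_def sources_def)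
    have un: "u < n" using us by (simp add: sources_def)
    have uv: "u \<noteq> v" using ov[of v2] ou[of v2] v12 by metis
    have uv12: "u \<noteq> v1" "u \<noteq> v2" using ns1 us by auto
    define G1 where "G1 = revG G u v1"
    have min1: "minimal_repair_graph n r C G1" unfolding G1_def using rev_min[OF min us outu] .
    show "Out_nb G v2 \<noteq> {}"
    proof
      assume o2: "Out_nb G v2 = {}"
      have o2': "(v2,b) \<notin> G" for b using o2 by (auto simp: Out_nb_def)
      have "v \<in> sources n G1" using vn inv vv uv
        by (auto simp: G1_def sources_def In_nb_def revG_def)
      moreover have "Out_nb G1 v = {v2,u}" using ov vv uv v12
        by (auto simp: G1_def Out_nb_def revG_def)
      moreover have "Out_nb G1 u = {}" using ou uv12
        by (auto simp: G1_def Out_nb_def revG_def)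
      moreover have "Out_nb G1 v2 = {}" using o2' v12 uv12
        by (auto simp: G1_def Out_nb_def revG_def)
      ultimately show False
        using closed3[OF slrc min1 _ vn un v12n(2)] t by simp
    qed
    show "\<forall>w\<in>In_nb G v2. w \<in> sources n G \<longrightarrow> 2 \<le> card (Out_nb G w)"
    proof (intro ballI impI, rule ccontr)
      fix w assume wi: "w \<in> In_nb G v2" and ws: "w \<in> sources n G" and nc: "\<not> 2 \<le> card (Out_nb G w)"
      have fo: "finite (Out_nb G w)" by (rule finite_subset[OF out_sub[OF rg]]) simp
      have v2o: "v2 \<in> Out_nb G w" using wi by (auto simp: In_nb_def Out_nb_def)
      have "card (Out_nb G w) \<le> Suc 0" using nc by linarith
      then have outw: "Out_nb G w = {v2}" using fo v2o card_le_Suc0_iff_eq[OF fo] by blast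
      have ow: "(w,b) \<in> G \<longleftrightarrow> b = v2" for b
        using outw by (auto simp: Out_nb_def set_eq_iff)
      have inw: "(a,w) \<notin> G" for a using ws by (auto simp: In_nb_def sources_def)
      have wn: "w < n" using ws by (simp add: sources_def)
      have wv: "w \<noteq> v" using ov[of v1] ow[of v1] v12 by metis
      have wu: "w \<noteq> u" using ou[of v1] ow[of v1] v12 by metis
      have wv12: "w \<noteq> v1" "w \<noteq> v2" using ns1 ws by auto
      have ws1: "w \<in> sources n G1" using wn inw wu
        by (auto simp: G1_def sources_def In_nb_def revG_def)
      have ow1: "Out_nb G1 w = {v2}" using ow wv12 v12
        by (auto simp: G1_def Out_nb_def revG_def)
      define G2 where "G2 = revG G1 w v2"
      have min2: "minimal_repair_graph n r C G2" unfolding G2_def using rev_min[OF min1 ws1 ow1] .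
      have g2: "(x,b) \<in> G2 \<longleftrightarrow> ((x,b) \<in> G1 \<and> b \<noteq> v2) \<or> (b = w \<and> (x,v2) \<in> G1 \<and> x \<noteq> w) \<or> (x = v2 \<and> b = w)" for x b
        unfolding G2_def revG_def by blast
      have g1: "(x,b) \<in> G1 \<longleftrightarrow> ((x,b) \<in> G \<and> b \<noteq> v1) \<or> (b = u \<and> (x,v1) \<in> G \<and> x \<noteq> u) \<or> (x = v1 \<and> b = u)" for x b
        unfolding G1_def revG_def by blast
      have og1v: "(v,b) \<in> G1 \<longleftrightarrow> b = v2 \<or> b = u" for b using g1 ov vv uv v12 by metis
      have og1u: "(u,b) \<notin> G1" for b using g1 ou uv12 by metis
      have og1w: "(w,b) \<in> G1 \<longleftrightarrow> b = v2" for b using ow1 by (auto simp: Out_nb_def set_eq_iff)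
      have ig1v: "(a,v) \<notin> G1" for a using g1 inv uv by metis
      have "v \<in> sources n G2" using vn ig1v wv g2
        by (auto simp: sources_def In_nb_def)
      moreover have "Out_nb G2 v = {u,w}" using og1v g2 v12 wv uv12 wu
        unfolding Out_nb_def by blast
      moreover have "Out_nb G2 u = {}" using og1u g2 uv12
        unfolding Out_nb_def by blast
      moreover have "Out_nb G2 w = {}" using og1w g2 wv12
        unfolding Out_nb_def by blast
      ultimately show False
        using closed3[OF slrc min2 _ vn un wn] t by simp
    qed
  qed
  show ?thesis using P1 P2 P3 by blast
qed

end
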